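(* Let $P\in\Delta_{\mathcal{T},\mathcal{X},\mathcal{Y}}$ and suppose $|\mathcal{T}|<\min\{|\mathcal{X}|,|\mathcal{Y}|\}$. If there exists a maximizer of $H_Q(T\mid X,Y)$ over $Q\in\Delta_P$ with full support $\mathcal{T}\times\mathcal{X}\times\mathcal{Y}$, then the maximizer is not unique.
   Context: $T,X,Y$ are random variables with finite state spaces $\mathcal{T},\mathcal{X},\mathcal{Y}$; $\Delta_{\mathcal{T},\mathcal{X},\mathcal{Y}}$ is the set of all joint distributions on $\mathcal{T}\times\mathcal{X}\times\mathcal{Y}$. For $P\in\Delta_{\mathcal{T},\mathcal{X},\mathcal{Y}}$, $\Delta_P=\{Q\in\Delta_{\mathcal{T},\mathcal{X},\mathcal{Y}}: Q(X=x,T=t)=P(X=x,T=t),\ Q(Y=y,T=t)=P(Y=y,T=t)\ \forall x,y,t\}$. $H_Q(T\mid X,Y)$ is the conditional entropy under $Q$. *)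

theory Defs
  imports "HOL-Analysis.Analysis"
begin

definition is_dist :: "('t::finite \<times> 'x::finite \<times> 'y::finite \<Rightarrow> real) \<Rightarrow> bool" where
  "is_dist Q \<longleftrightarrow> (\<forall>z. 0 \<le> Q z) \<and> (\<Sum>z\<in>UNIV. Q z) = 1"

definition Delta_P :: "('t::finite \<times> 'x::finite \<times> 'y::finite \<Rightarrow> real) \<Rightarrow> ('t \<times> 'x \<times> 'y \<Rightarrow> real) set" where
  "Delta_P P = {Q. is_dist Q \<and>
      (\<forall>t x. (\<Sum>y\<in>UNIV. Q (t, x, y)) = (\<Sum>y\<in>UNIV. P (t, x, y))) \<and>
      (\<forall>t y. (\<Sum>x\<in>UNIV. Q (t, x, y)) = (\<Sum>x\<in>UNIV. P (t, x, y)))}"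

text \<open>Natural logarithm (the base does not affect maximizers).\<close>

definition cond_entropy :: "('t::finite \<times> 'x::finite \<times> 'y::finite \<Rightarrow> real) \<Rightarrow> real" where
  "cond_entropy Q = - (\<Sum>(t, x, y)\<in>UNIV.
      if Q (t, x, y) = 0 then 0
      else Q (t, x, y) * ln (Q (t, x, y) / (\<Sum>t'\<in>UNIV. Q (t', x, y))))"

end

theory Submission
  imports Defs
begin


lemma sum2:
  fixes f :: "'t::finite \<times> 'x::finite \<Rightarrow> 'a::comm_monoid_add"
  shows "(\<Sum>z\<in>UNIV. f z) = (\<Sum>t\<in>UNIV. \<Sum>x\<in>UNIV. f (t,x))"
proof -
  have "(\<Sum>z\<in>UNIV. f z) = (\<Sum>z\<in>UNIV \<times> UNIV. f z)" by simp
  also have "\<dots> = (\<Sum>t\<in>UNIV. \<Sum>x\<in>UNIV. f (t,x))"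
    by (subst sum.cartesian_product) simp
  finally show ?thesis .
qed

lemma sum3:
  fixes f :: "'t::finite \<times> 'x::finite \<times> 'y::finite \<Rightarrow> 'a::comm_monoid_add"
  shows "(\<Sum>z\<in>UNIV. f z) = (\<Sum>t\<in>UNIV. \<Sum>x\<in>UNIV. \<Sum>y\<in>UNIV. f (t,x,y))"
  by (simp add: sum2[of f] sum2[of "\<lambda>p. f (_, p)"])

lemma stationary:
  fixes P Q0 D :: "'t::finite \<times> 'x::finite \<times> 'y::finite \<Rightarrow> real"
  assumes Q0: "Q0 \<in> Delta_P P"
    and mx: "\<forall>Q\<in>Delta_P P. cond_entropy Q \<le> cond_entropy Q0"
    and pos: "\<forall>z. Q0 z > 0"
    and dx: "\<And>t x. (\<Sum>y\<in>UNIV. D (t,x,y)) = 0"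
    and dy: "\<And>t y. (\<Sum>x\<in>UNIV. D (t,x,y)) = 0"
    and dt: "\<And>x y. (\<Sum>t\<in>UNIV. D (t,x,y)) = 0"
  shows "(\<Sum>z\<in>UNIV. D z * ln (Q0 z)) = 0"
proof -
  define S where "S x y = (\<Sum>t\<in>UNIV. Q0 (t,x,y))" for x y
  have Spos: "S x y > 0" for x y unfolding S_def using pos by (intro sum_pos) auto
  define m where "m = Min (range Q0)"
  have mpos: "m > 0" unfolding m_def using pos by (subst Min_gr_iff) auto
  have mle: "m \<le> Q0 z" for z unfolding m_def by (rule Min_le) auto
  define M where "M = 1 + (\<Sum>z\<in>UNIV. \<bar>D z\<bar>)"
  have DM: "\<bar>D z\<bar> \<le> M" for z
  proof -
    have "\<bar>D z\<bar> \<le> (\<Sum>z\<in>UNIV. \<bar>D z\<bar>)" by (rule member_le_sum) auto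
    then show ?thesis unfolding M_def by simp
  qed
  have "0 \<le> (\<Sum>z\<in>UNIV. \<bar>D z\<bar>)" by (rule sum_nonneg) simp
  then have Mpos: "M > 0" unfolding M_def by linarith
  define d where "d = m / M"
  have dpos: "d > 0" unfolding d_def using mpos Mpos by simp
  have Qepos: "Q0 z + e * D z > 0" if "\<bar>e\<bar> < d" for e z
  proof -
    have "\<bar>e\<bar> * \<bar>D z\<bar> < m"
    proof (cases "D z = 0")
      case True then show ?thesis using mpos by simp
    next
      case False
      have "\<bar>e\<bar> * \<bar>D z\<bar> < d * \<bar>D z\<bar>" using that False by (intro mult_strict_right_mono) auto
      also have "\<dots> \<le> d * M" using DM dpos by (intro mult_left_mono) auto
      finally show ?thesis unfolding d_def using Mpos by simp
    qed
    then have "\<bar>e * D z\<bar> < m" by (simp add: abs_mult)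
    moreover have "-(e * D z) \<le> \<bar>e * D z\<bar>" by simp
    ultimately show ?thesis using mle[of z] by linarith
  qed
  have sumD: "(\<Sum>z\<in>UNIV. D z) = 0" unfolding sum3 using dx by simp
  have inD: "(\<lambda>z. Q0 z + e * D z) \<in> Delta_P P" if "\<bar>e\<bar> < d" for e
    using Q0 Qepos[OF that]
    by (auto simp: Delta_P_def is_dist_def sum.distrib sum_distrib_left[symmetric] sumD dx dy less_imp_le)
  define G where "G e = - (\<Sum>t\<in>UNIV. \<Sum>x\<in>UNIV. \<Sum>y\<in>UNIV.
       (Q0 (t,x,y) + e * D (t,x,y)) * (ln (Q0 (t,x,y) + e * D (t,x,y)) - ln (S x y)))" for e
  have GH: "cond_entropy (\<lambda>z. Q0 z + e * D z) = G e" if "\<bar>e\<bar> < d" for e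
  proof -
    have St: "(\<Sum>t'\<in>UNIV. Q0 (t',x,y) + e * D (t',x,y)) = S x y" for x y
      by (simp add: sum.distrib sum_distrib_left[symmetric] dt S_def)
    have nz: "Q0 z + e * D z \<noteq> 0" for z using Qepos[OF that, of z] by simp
    show ?thesis unfolding cond_entropy_def G_def sum3
      using Qepos[OF that] Spos
      by (simp add: St ln_div nz less_imp_neq[OF Spos, symmetric])
  qed
  have der: "(G has_real_derivative - (\<Sum>t\<in>UNIV. \<Sum>x\<in>UNIV. \<Sum>y\<in>UNIV.
       D (t,x,y) * (ln (Q0 (t,x,y)) - ln (S x y)) + D (t,x,y))) (at 0)"
    unfolding G_def
    apply (intro DERIV_minus DERIV_sum)
    subgoal for t x y
      using pos[rule_format, of "(t,x,y)"]
      by (auto intro!: derivative_eq_intros)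
    done
  have "- (\<Sum>t\<in>UNIV. \<Sum>x\<in>UNIV. \<Sum>y\<in>UNIV.
       D (t,x,y) * (ln (Q0 (t,x,y)) - ln (S x y)) + D (t,x,y)) = 0"
  proof (rule DERIV_local_max[OF der dpos], intro allI impI)
    fix e :: real assume "\<bar>0 - e\<bar> < d"
    then have e: "\<bar>e\<bar> < d" by simp
    have "G e = cond_entropy (\<lambda>z. Q0 z + e * D z)" using GH[OF e] by simp
    also have "\<dots> \<le> cond_entropy Q0" using mx inD[OF e] by blast
    also have "\<dots> = G 0" using GH[of 0] dpos by simp
    finally show "G e \<le> G 0" .
  qed
  then have A: "(\<Sum>t\<in>UNIV. \<Sum>x\<in>UNIV. \<Sum>y\<in>UNIV.
       D (t,x,y) * ln (Q0 (t,x,y)) - D (t,x,y) * ln (S x y) + D (t,x,y)) = 0"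
    by (simp add: algebra_simps)
  have B: "(\<Sum>t\<in>UNIV. \<Sum>x\<in>UNIV. \<Sum>y\<in>UNIV. D (t,x,y) * ln (S x y)) = 0"
  proof -
    have "(\<Sum>t\<in>UNIV. \<Sum>x\<in>UNIV. \<Sum>y\<in>UNIV. D (t,x,y) * ln (S x y))
        = (\<Sum>x\<in>UNIV. \<Sum>t\<in>UNIV. \<Sum>y\<in>UNIV. D (t,x,y) * ln (S x y))"
      by (rule sum.swap)
    also have "\<dots> = (\<Sum>x\<in>UNIV. \<Sum>y\<in>UNIV. \<Sum>t\<in>UNIV. D (t,x,y) * ln (S x y))"
      by (intro sum.cong refl sum.swap)
    also have "\<dots> = 0" by (simp add: sum_distrib_right[symmetric] dt)
    finally show ?thesis .
  qed
  have C: "(\<Sum>t\<in>UNIV. \<Sum>x\<in>UNIV. \<Sum>y\<in>UNIV. D (t,x,y)) = 0" using dx by simp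
  from A B C show ?thesis unfolding sum3 by (simp add: sum_subtractf sum.distrib)
qed


lemma flat_direction:
  fixes P Q0 :: "'t::finite \<times> 'x::finite \<times> 'y::finite \<Rightarrow> real" and c :: "'x \<Rightarrow> 'y \<Rightarrow> real"
  assumes Q0: "Q0 \<in> Delta_P P"
    and mx: "\<forall>Q\<in>Delta_P P. cond_entropy Q \<le> cond_entropy Q0"
    and pos: "\<forall>z. Q0 z > 0"
    and cx: "\<And>t x. (\<Sum>y\<in>UNIV. Q0 (t,x,y) * c x y) = 0"
    and cy: "\<And>t y. (\<Sum>x\<in>UNIV. Q0 (t,x,y) * c x y) = 0"
    and c1: "c x1 y1 \<noteq> 0"
  shows "\<exists>Q1\<in>Delta_P P. Q1 \<noteq> Q0 \<and> (\<forall>Q\<in>Delta_P P. cond_entropy Q \<le> cond_entropy Q1)"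
proof -
  define S where "S x y = (\<Sum>t\<in>UNIV. Q0 (t,x,y))" for x y
  have Spos: "S x y > 0" for x y unfolding S_def using pos by (intro sum_pos) auto
  define Cs where "Cs = (\<Sum>p\<in>UNIV. \<bar>c (fst p) (snd p)\<bar>)"
  have cC: "\<bar>c x y\<bar> \<le> Cs" for x y
    unfolding Cs_def using member_le_sum[of "(x,y)" UNIV "\<lambda>p. \<bar>c (fst p) (snd p)\<bar>"] by simp
  have Cs0: "0 \<le> Cs" unfolding Cs_def by (rule sum_nonneg) simp
  define \<epsilon> where "\<epsilon> = 1 / (1 + Cs)"
  have epos: "\<epsilon> > 0" unfolding \<epsilon>_def using Cs0 by simp
  have fac: "1 + e * c x y > 0" if "\<bar>e\<bar> \<le> \<epsilon>" for e x y
  proof -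
    have "\<bar>e * c x y\<bar> \<le> \<epsilon> * Cs" unfolding abs_mult
      using that cC[of x y] Cs0 by (intro mult_mono) auto
    also have "\<dots> < 1" unfolding \<epsilon>_def using Cs0 by (simp add: field_simps)
    finally have "\<bar>e * c x y\<bar> < 1" .
    moreover have "-(e * c x y) \<le> \<bar>e * c x y\<bar>" by simp
    ultimately show ?thesis by linarith
  qed
  define Qe where "Qe e = (\<lambda>(t,x,y). Q0 (t,x,y) * (1 + e * c x y))" for e
  have Qe_pos: "Qe e z > 0" if "\<bar>e\<bar> \<le> \<epsilon>" for e z
    using pos fac[OF that] by (cases z) (auto simp: Qe_def)
  have Qe_alt: "Qe e (t,x,y) = Q0 (t,x,y) + e * (Q0 (t,x,y) * c x y)" for e t x y
    by (simp add: Qe_def algebra_simps)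
  have sumc: "(\<Sum>z\<in>UNIV. (case z of (t,x,y) \<Rightarrow> Q0 (t,x,y) * c x y)) = 0"
    unfolding sum3 using cx by simp
  have inD: "Qe e \<in> Delta_P P" if "\<bar>e\<bar> \<le> \<epsilon>" for e
  proof -
    have s1: "(\<Sum>z\<in>UNIV. Qe e z) = 1"
    proof -
      have "(\<Sum>z\<in>UNIV. Qe e z) = (\<Sum>z\<in>UNIV. Q0 z) + e * (\<Sum>z\<in>UNIV. (case z of (t,x,y) \<Rightarrow> Q0 (t,x,y) * c x y))"
        unfolding sum3 by (simp add: Qe_alt sum.distrib sum_distrib_left)
      then show ?thesis using Q0 sumc by (simp add: Delta_P_def is_dist_def)
    qed
    show ?thesis using Q0 Qe_pos[OF that] s1
      by (auto simp: Delta_P_def is_dist_def Qe_alt sum.distrib sum_distrib_left[symmetric] cx cy less_imp_le)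
  qed
  define H0 where "H0 = (\<Sum>t\<in>UNIV. \<Sum>x\<in>UNIV. \<Sum>y\<in>UNIV. Q0 (t,x,y) * ln (Q0 (t,x,y) / S x y))"
  define K where "K = (\<Sum>t\<in>UNIV. \<Sum>x\<in>UNIV. \<Sum>y\<in>UNIV. Q0 (t,x,y) * c x y * ln (Q0 (t,x,y) / S x y))"
  have HQ0: "cond_entropy Q0 = - H0"
  proof -
    have nz: "Q0 z \<noteq> 0" for z using pos[rule_format, of z] by simp
    show ?thesis unfolding cond_entropy_def H0_def sum3 S_def by (simp add: nz)
  qed
  have HQe: "cond_entropy (Qe e) = - H0 - e * K" if "\<bar>e\<bar> \<le> \<epsilon>" for e
  proof -
    have nz: "Qe e z \<noteq> 0" for z using Qe_pos[OF that, of z] by simp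
    have St: "(\<Sum>t'\<in>UNIV. Qe e (t',x,y)) = S x y * (1 + e * c x y)" for x y
      by (simp add: Qe_def S_def sum_distrib_right)
    have rat: "Qe e (t,x,y) / (S x y * (1 + e * c x y)) = Q0 (t,x,y) / S x y" for t x y
      using fac[OF that, of x y] by (simp add: Qe_def)
    have "cond_entropy (Qe e) = - (\<Sum>t\<in>UNIV. \<Sum>x\<in>UNIV. \<Sum>y\<in>UNIV.
        Qe e (t,x,y) * ln (Q0 (t,x,y) / S x y))"
      unfolding cond_entropy_def sum3 by (simp add: nz St rat)
    also have "\<dots> = - H0 - e * K"
      unfolding H0_def K_def
      by (simp add: Qe_alt algebra_simps sum.distrib sum_distrib_left)
    finally show ?thesis .
  qed
  have "- H0 - \<epsilon> * K \<le> - H0" using mx inD[of \<epsilon>] HQe[of \<epsilon>] HQ0 epos by auto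
  moreover have "- H0 - (-\<epsilon>) * K \<le> - H0" using mx inD[of "-\<epsilon>"] HQe[of "-\<epsilon>"] HQ0 epos by auto
  ultimately have "\<epsilon> * K = 0" by linarith
  then have K0: "K = 0" using epos by simp
  show ?thesis
  proof (intro bexI conjI ballI)
    show "Qe \<epsilon> \<in> Delta_P P" using inD epos by simp
    fix Q assume "Q \<in> Delta_P P"
    then show "cond_entropy Q \<le> cond_entropy (Qe \<epsilon>)" using mx HQe[of \<epsilon>] HQ0 K0 epos by simp
  next
    obtain t1 :: 't where True by simp
    have "Qe \<epsilon> (t1,x1,y1) \<noteq> Q0 (t1,x1,y1)"
      using epos c1 pos[rule_format, of "(t1,x1,y1)"] by (simp add: Qe_alt)
    then show "Qe \<epsilon> \<noteq> Q0" by metis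
  qed
qed


definition dl :: "'a \<Rightarrow> 'a \<Rightarrow> real" where "dl p z = (if z = p then 1 else 0)"

lemma dl_y:
  fixes a :: "'t::finite" and b :: "'x::finite" and c :: "'y::finite"
  shows "(\<Sum>y'\<in>UNIV. dl (a,b,c) (t',x',y')) = (if t' = a \<and> x' = b then 1 else 0)"
  by (cases "t' = a \<and> x' = b") (auto simp: dl_def)
lemma dl_x:
  fixes a :: "'t::finite" and b :: "'x::finite" and c :: "'y::finite"
  shows "(\<Sum>x'\<in>UNIV. dl (a,b,c) (t',x',y')) = (if t' = a \<and> y' = c then 1 else 0)"
  by (cases "t' = a \<and> y' = c") (auto simp: dl_def)
lemma dl_t:
  fixes a :: "'t::finite" and b :: "'x::finite" and c :: "'y::finite"
  shows "(\<Sum>t'\<in>UNIV. dl (a,b,c) (t',x',y')) = (if x' = b \<and> y' = c then 1 else 0)"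
  by (cases "x' = b \<and> y' = c") (auto simp: dl_def)
lemma dl_all:
  fixes p :: "'a::finite"
  shows "(\<Sum>z\<in>UNIV. dl p z * f z) = f p"
proof -
  have "(\<Sum>z\<in>UNIV. dl p z * f z) = (\<Sum>z\<in>UNIV. if z = p then f p else 0)"
    by (intro sum.cong) (auto simp: dl_def)
  then show ?thesis by (simp add: sum.delta)
qed

lemma kernel_exists:
  fixes F :: "'t::finite \<Rightarrow> 'x::finite \<Rightarrow> real"
  assumes "CARD('t) < CARD('x)"
  shows "\<exists>u. u \<noteq> (\<lambda>_. 0) \<and> (\<forall>t. (\<Sum>x\<in>UNIV. u x * F t x) = 0)"
proof -
  define f :: "real^'x \<Rightarrow> real^'t" where "f w = (\<chi> t. \<Sum>x\<in>UNIV. w$x * F t x)" for w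
  have lin: "linear f"
    unfolding f_def by (intro linearI) (auto simp: vec_eq_iff sum.distrib algebra_simps sum_distrib_left)
  have "\<not> inj f"
  proof
    assume "inj f"
    then have "dim (f ` UNIV) = dim (UNIV :: (real^'x) set)"
      using lin by (intro dim_image_eq) (auto intro: inj_on_subset)
    moreover have "dim (f ` UNIV) \<le> CARD('t)" using dim_subset_UNIV[of "f ` UNIV"] by simp
    ultimately show False using assms by (simp add: dim_UNIV)
  qed
  then obtain w where w: "f w = 0" "w \<noteq> 0" using lin linear_injective_0 by blast
  show ?thesis
  proof (intro exI conjI allI)
    show "(\<lambda>x. w$x) \<noteq> (\<lambda>_. 0)" using w(2) by (auto simp: vec_eq_iff fun_eq_iff)
    fix t show "(\<Sum>x\<in>UNIV. w$x * F t x) = 0" using w(1) by (auto simp: f_def vec_eq_iff)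
  qed
qed

theorem mainTheorem8:
  fixes P :: "'t::finite \<times> 'x::finite \<times> 'y::finite \<Rightarrow> real"
  assumes "is_dist P"
    and "CARD('t) < min CARD('x) CARD('y)"
    and "Q0 \<in> Delta_P P"
    and "\<forall>Q\<in>Delta_P P. cond_entropy Q \<le> cond_entropy Q0"
    and "\<forall>z. Q0 z > 0"
  shows "\<exists>Q1\<in>Delta_P P. Q1 \<noteq> Q0 \<and> (\<forall>Q\<in>Delta_P P. cond_entropy Q \<le> cond_entropy Q1)"
proof -
  define L where "L z = ln (Q0 z)" for z
  obtain t0 :: 't where True by simp
  obtain x0 :: 'x where True by simp
  obtain y0 :: 'y where True by simp
  have rel: "L (t,x,y) - L (t,x,y0) - L (t,x0,y) + L (t,x0,y0) - L (t0,x,y) + L (t0,x,y0)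
      + L (t0,x0,y) - L (t0,x0,y0) = 0" for t x y
  proof -
    define D where "D z = dl (t,x,y) z - dl (t,x,y0) z - dl (t,x0,y) z + dl (t,x0,y0) z
       - dl (t0,x,y) z + dl (t0,x,y0) z + dl (t0,x0,y) z - dl (t0,x0,y0) z" for z
    have "(\<Sum>z\<in>UNIV. D z * ln (Q0 z)) = 0"
    proof (rule stationary[OF assms(3,4,5)])
      show "(\<Sum>y'\<in>UNIV. D (t',x',y')) = 0" for t' x'
        unfolding D_def by (simp add: sum.distrib sum_subtractf dl_y)
      show "(\<Sum>x'\<in>UNIV. D (t',x',y')) = 0" for t' y'
        unfolding D_def by (simp add: sum.distrib sum_subtractf dl_x)
      show "(\<Sum>t'\<in>UNIV. D (t',x',y')) = 0" for x' y'
        unfolding D_def by (simp add: sum.distrib sum_subtractf dl_t)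
    qed
    then show ?thesis unfolding D_def L_def
      by (simp add: left_diff_distrib distrib_right sum.distrib sum_subtractf dl_all)
  qed
  define a where "a t x = L (t,x,y0) - L (t0,x,y0)" for t x
  define b where "b t y = L (t,x0,y) - L (t0,x0,y) - L (t,x0,y0) + L (t0,x0,y0)" for t y
  define h where "h x y = L (t0,x,y)" for x y
  have Q0eq: "Q0 (t,x,y) = exp (a t x) * exp (b t y) * exp (h x y)" for t x y
  proof -
    have "L (t,x,y) = a t x + b t y + h x y" using rel[of t x y] unfolding a_def b_def h_def by linarith
    then have "exp (L (t,x,y)) = exp (a t x) * exp (b t y) * exp (h x y)" by (simp add: exp_add)
    then show ?thesis unfolding L_def using assms(5) by simp
  qed
  have "CARD('t) < CARD('x)" using assms(2) by simp
  from kernel_exists[OF this, of "\<lambda>t x. exp (a t x)"]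
  obtain u where u: "u \<noteq> (\<lambda>_. 0)" "\<And>t. (\<Sum>x\<in>UNIV. u x * exp (a t x)) = 0" by blast
  have "CARD('t) < CARD('y)" using assms(2) by simp
  from kernel_exists[OF this, of "\<lambda>t y. exp (b t y)"]
  obtain v where v: "v \<noteq> (\<lambda>_. 0)" "\<And>t. (\<Sum>y\<in>UNIV. v y * exp (b t y)) = 0" by blast
  obtain x1 where x1: "u x1 \<noteq> 0" using u(1) by auto
  obtain y1 where y1: "v y1 \<noteq> 0" using v(1) by auto
  define c where "c x y = u x * v y / exp (h x y)" for x y
  have key: "Q0 (t,x,y) * c x y = (u x * exp (a t x)) * (v y * exp (b t y))" for t x y
    unfolding c_def Q0eq by (simp add: field_simps)
  show ?thesis
  proof (rule flat_direction[OF assms(3,4,5), of c x1 y1])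
    show "(\<Sum>y\<in>UNIV. Q0 (t,x,y) * c x y) = 0" for t x
      unfolding key by (simp add: sum_distrib_left[symmetric] v(2))
    show "(\<Sum>x\<in>UNIV. Q0 (t,x,y) * c x y) = 0" for t y
      unfolding key by (simp add: sum_distrib_right[symmetric] u(2))
    show "c x1 y1 \<noteq> 0" using x1 y1 by (simp add: c_def)
  qed
qed
end
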